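(* Let $\gamma>1$ be a constant. There exists a constant $C>0$ such that, for all sufficiently large $n$ and any $p\ge\gamma\log n/(n-1)$, with probability at least $1-n^{-C}$ the following holds in $\mathcal G(n,p)$: for every $S\subsetneq[n]$ with $2\le|S|\le n-2$, $|E(S,[n]\setminus S)|\ge1.5\,\delta$, where $\delta$ is the minimum degree of $\mathcal G(n,p)$.
   Context: $\mathcal G(n,p)$ is the Erdős–Rényi random graph on $[n]$ with edge probability $p$; $E(S,S')$ is the set of edges with one end in $S$ and the other in $S'$. *)

theory Defs
  imports Complex_Main
begin

text \<open>Vertex set [n] = {1..n}. A graph on [n] is a set of edges, each edge a
  2-element subset of [n].\<close>

definition all_edges :: "nat \<Rightarrow> nat set set" where
  "all_edges n = {e. \<exists>u v. u \<in> {1..n} \<and> v \<in> {1..n} \<and> u \<noteq> v \<and> e = {u, v}}"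

definition gnp_prob :: "nat \<Rightarrow> real \<Rightarrow> (nat set set \<Rightarrow> bool) \<Rightarrow> real" where
  "gnp_prob n p P =
     (\<Sum>E \<in> {E. E \<subseteq> all_edges n \<and> P E}.
        p ^ card E * (1 - p) ^ (card (all_edges n) - card E))"

definition degree :: "nat set set \<Rightarrow> nat \<Rightarrow> nat" where
  "degree E v = card {u. {u, v} \<in> E}"

definition min_degree :: "nat \<Rightarrow> nat set set \<Rightarrow> nat" where
  "min_degree n E = Min (degree E ` {1..n})"

definition cut_edges :: "nat set set \<Rightarrow> nat set \<Rightarrow> nat set \<Rightarrow> nat set set" where
  "cut_edges E S S' = {e \<in> E. \<exists>u \<in> S. \<exists>v \<in> S'. e = {u, v}}"

end

theory Submission
  imports Defs
begin


lemma sum_pow_binom: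
  fixes p q :: real
  assumes "finite X"
  shows "(\<Sum>B\<in>Pow X. p ^ card B * q ^ (card X - card B)) = (p + q) ^ card X"
  using assms
proof (induction X rule: finite_induct)
  case empty then show ?case by simp
next
  case (insert x X)
  have d: "Pow X \<inter> insert x ` Pow X = {}" using insert by auto
  have inj: "inj_on (insert x) (Pow X)" using insert
    by (smt (verit, ccfv_SIG) PowD inj_onI insert_Diff_if insert_absorb insert_ident subset_eq)
  have cB: "\<And>B. B \<in> Pow X \<Longrightarrow> card (insert x B) = Suc (card B) \<and> card B \<le> card X"
    using insert by (metis PowD card_insert_disjoint card_mono finite_subset subsetD)
  have "(\<Sum>B\<in>Pow (insert x X). p ^ card B * q ^ (card (insert x X) - card B))
      = (\<Sum>B\<in>Pow X. p ^ card B * q ^ (Suc (card X) - card B))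
        + (\<Sum>B\<in>insert x ` Pow X. p ^ card B * q ^ (Suc (card X) - card B))"
    using insert d by (simp add: Pow_insert sum.union_disjoint)
  also have "(\<Sum>B\<in>insert x ` Pow X. p ^ card B * q ^ (Suc (card X) - card B))
      = (\<Sum>B\<in>Pow X. p ^ Suc (card B) * q ^ (Suc (card X) - Suc (card B)))"
    by (subst sum.reindex[OF inj]) (auto intro!: sum.cong simp: cB)
  also have "\<dots> = p * (\<Sum>B\<in>Pow X. p ^ card B * q ^ (card X - card B))"
    by (simp add: sum_distrib_left mult.assoc)
  also have "(\<Sum>B\<in>Pow X. p ^ card B * q ^ (Suc (card X) - card B))
      = q * (\<Sum>B\<in>Pow X. p ^ card B * q ^ (card X - card B))"
    by (auto simp: sum_distrib_left cB Suc_diff_le intro!: sum.cong)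
  finally show ?case using insert by (simp add: algebra_simps)
qed

lemma marginal:
  fixes p q :: real
  assumes "finite M" "F \<subseteq> M"
  shows "(\<Sum>E\<in>{E. E \<subseteq> M \<and> P (E \<inter> F)}. p ^ card E * q ^ (card M - card E))
        = (p+q)^(card M - card F) * (\<Sum>A\<in>{A. A \<subseteq> F \<and> P A}. p ^ card A * q ^ (card F - card A))"
proof -
  have fF: "finite F" using assms finite_subset by auto
  have fMF: "finite (M - F)" using assms by auto
  have cM: "card M = card F + card (M - F)" using assms fF
    by (metis card_Diff_subset card_mono le_add_diff_inverse)
  let ?g = "\<lambda>(A,B). A \<union> (B::'a set)"
  have img: "{E. E \<subseteq> M \<and> P (E \<inter> F)} = ?g ` ({A. A \<subseteq> F \<and> P A} \<times> Pow (M - F))"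
  proof (rule set_eqI, rule iffI)
    fix E assume "E \<in> {E. E \<subseteq> M \<and> P (E \<inter> F)}"
    then have "E = ?g (E \<inter> F, E - F)" "(E \<inter> F, E - F) \<in> {A. A \<subseteq> F \<and> P A} \<times> Pow (M - F)"
      by auto
    then show "E \<in> ?g ` ({A. A \<subseteq> F \<and> P A} \<times> Pow (M - F))" by blast
  next
    fix E assume "E \<in> ?g ` ({A. A \<subseteq> F \<and> P A} \<times> Pow (M - F))"
    then obtain A B where "A \<subseteq> F" "P A" "B \<subseteq> M - F" "E = A \<union> B" by auto
    moreover have "(A \<union> B) \<inter> F = A" using \<open>A \<subseteq> F\<close> \<open>B \<subseteq> M - F\<close> by auto
    ultimately show "E \<in> {E. E \<subseteq> M \<and> P (E \<inter> F)}" using assms by auto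
  qed
  have inj: "inj_on ?g ({A. A \<subseteq> F \<and> P A} \<times> Pow (M - F))"
  proof (rule inj_onI, clarify)
    fix A B A' B' assume "A \<subseteq> F" "B \<subseteq> M - F" "A' \<subseteq> F" "B' \<subseteq> M - F" "A \<union> B = A' \<union> B'"
    then show "A = A' \<and> B = B'" by blast
  qed
  have "(\<Sum>E\<in>{E. E \<subseteq> M \<and> P (E \<inter> F)}. p ^ card E * q ^ (card M - card E))
     = (\<Sum>(A,B)\<in>{A. A \<subseteq> F \<and> P A} \<times> Pow (M - F). p ^ card (A \<union> B) * q ^ (card M - card (A \<union> B)))"
    unfolding img by (subst sum.reindex[OF inj]) (simp add: case_prod_unfold)
  also have "\<dots> = (\<Sum>(A,B)\<in>{A. A \<subseteq> F \<and> P A} \<times> Pow (M - F).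
        (p ^ card A * q ^ (card F - card A)) * (p ^ card B * q ^ (card (M - F) - card B)))"
  proof (rule sum.cong[OF refl])
    fix x assume "x \<in> {A. A \<subseteq> F \<and> P A} \<times> Pow (M - F)"
    then obtain A B where x: "x = (A,B)" and AB: "A \<subseteq> F" "P A" "B \<subseteq> M - F" by auto
    have fA: "finite A" "finite B" using AB fF fMF by (auto simp: finite_subset)
    have c1: "card (A \<union> B) = card A + card B" using AB fA by (subst card_Un_disjoint) auto
    have c2: "card A \<le> card F" "card B \<le> card (M - F)" using AB fF fMF by (auto intro: card_mono)
    have "card M - card (A \<union> B) = (card F - card A) + (card (M - F) - card B)"
      using c1 c2 cM by linarith
    then show "(case x of (A, B) \<Rightarrow> p ^ card (A \<union> B) * q ^ (card M - card (A \<union> B))) =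
         (case x of (A, B) \<Rightarrow> p ^ card A * q ^ (card F - card A) * (p ^ card B * q ^ (card (M - F) - card B)))"
      by (simp add: x c1 power_add algebra_simps)
  qed
  also have "\<dots> = (\<Sum>A\<in>{A. A \<subseteq> F \<and> P A}. p ^ card A * q ^ (card F - card A)) *
          (\<Sum>B\<in>Pow (M - F). p ^ card B * q ^ (card (M - F) - card B))"
    by (simp add: sum_product sum.cartesian_product case_prod_unfold)
  also have "(\<Sum>B\<in>Pow (M - F). p ^ card B * q ^ (card (M - F) - card B)) = (p+q)^(card M - card F)"
    using sum_pow_binom[OF fMF] cM by simp
  finally show ?thesis by simp
qed



lemma finite_all_edges: "finite (all_edges n)"
proof -
  have "all_edges n \<subseteq> Pow {1..n}" unfolding all_edges_def by auto
  then show ?thesis by (rule finite_subset) simp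
qed

lemma gnp_alt: "gnp_prob n p P = (\<Sum>E\<in>Pow (all_edges n). if P E then p ^ card E * (1 - p) ^ (card (all_edges n) - card E) else 0)"
  unfolding gnp_prob_def
  by (subst sum.inter_filter[symmetric]) (auto simp: finite_all_edges intro!: sum.cong)

lemma gnp_marg:
  assumes "F \<subseteq> all_edges n"
  shows "gnp_prob n p (\<lambda>E. P (E \<inter> F)) = (\<Sum>A\<in>{A. A \<subseteq> F \<and> P A}. p ^ card A * (1-p) ^ (card F - card A))"
  unfolding gnp_prob_def using marginal[OF finite_all_edges assms, where P=P and p=p and q="1-p"] by simp

lemma gnp_total: "gnp_prob n p (\<lambda>E. True) = 1"
  using gnp_marg[of "{}" n p "\<lambda>_. True"] by simp

lemma gnp_cong: "(\<And>E. E \<subseteq> all_edges n \<Longrightarrow> P E = Q E) \<Longrightarrow> gnp_prob n p P = gnp_prob n p Q"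
  unfolding gnp_prob_def by (rule sum.cong) auto

lemma gnp_compl: "gnp_prob n p (\<lambda>E. \<not> P E) = 1 - gnp_prob n p P"
proof -
  have "gnp_prob n p (\<lambda>E. \<not> P E) + gnp_prob n p P = gnp_prob n p (\<lambda>E. True)"
    unfolding gnp_alt by (subst sum.distrib[symmetric]) (auto intro!: sum.cong)
  then show ?thesis using gnp_total by simp
qed

lemma w_nonneg: "0 \<le> p \<Longrightarrow> p \<le> 1 \<Longrightarrow> 0 \<le> p ^ k * (1 - p) ^ m"
  for p :: real by simp

lemma gnp_mono:
  assumes "0 \<le> p" "p \<le> 1" "\<And>E. E \<subseteq> all_edges n \<Longrightarrow> P E \<Longrightarrow> Q E"
  shows "gnp_prob n p P \<le> gnp_prob n p Q"
  unfolding gnp_alt using assms by (intro sum_mono) auto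

lemma gnp_union:
  assumes "0 \<le> p" "p \<le> 1" "finite I"
  shows "gnp_prob n p (\<lambda>E. \<exists>i\<in>I. P i E) \<le> (\<Sum>i\<in>I. gnp_prob n p (P i))"
proof -
  let ?w = "\<lambda>E. p ^ card E * (1 - p) ^ (card (all_edges n) - card E)"
  have "gnp_prob n p (\<lambda>E. \<exists>i\<in>I. P i E) \<le> (\<Sum>E\<in>Pow (all_edges n). \<Sum>i\<in>I. if P i E then ?w E else 0)"
    unfolding gnp_alt
  proof (rule sum_mono)
    fix E
    show "(if \<exists>i\<in>I. P i E then ?w E else 0) \<le> (\<Sum>i\<in>I. if P i E then ?w E else 0)"
    proof (cases "\<exists>i\<in>I. P i E")
      case True
      then obtain i where "i \<in> I" "P i E" by auto
      then have "(if P i E then ?w E else 0) \<le> (\<Sum>i\<in>I. if P i E then ?w E else 0)"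
        using assms by (intro member_le_sum) auto
      then show ?thesis using True \<open>P i E\<close> by simp
    next
      case False
      then show ?thesis using assms by (simp add: sum_nonneg)
    qed
  qed
  also have "\<dots> = (\<Sum>i\<in>I. gnp_prob n p (P i))"
    unfolding gnp_alt by (rule sum.swap)
  finally show ?thesis .
qed

lemma gnp_disj:
  assumes "0 \<le> p" "p \<le> 1"
  shows "gnp_prob n p (\<lambda>E. P E \<or> Q E) \<le> gnp_prob n p P + gnp_prob n p Q"
proof -
  have "gnp_prob n p (\<lambda>E. P E \<or> Q E) \<le> gnp_prob n p P + gnp_prob n p (\<lambda>E. Q E \<and> \<not> P E)"
    unfolding gnp_alt by (subst sum.distrib[symmetric]) (auto intro!: sum_mono)
  also have "gnp_prob n p (\<lambda>E. Q E \<and> \<not> P E) \<le> gnp_prob n p Q"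
    using assms by (intro gnp_mono) auto
  finally show ?thesis by simp
qed

lemma gnp_nonneg: "0 \<le> p \<Longrightarrow> p \<le> 1 \<Longrightarrow> 0 \<le> gnp_prob n p P"
  unfolding gnp_prob_def by (intro sum_nonneg) auto

lemma gnp_subset:
  assumes "T \<subseteq> all_edges n"
  shows "gnp_prob n p (\<lambda>E. T \<subseteq> E) = p ^ card T"
proof -
  have "gnp_prob n p (\<lambda>E. T \<subseteq> E) = gnp_prob n p (\<lambda>E. T \<subseteq> E \<inter> T)"
    by (rule gnp_cong) auto
  also have "\<dots> = (\<Sum>A\<in>{A. A \<subseteq> T \<and> T \<subseteq> A}. p ^ card A * (1-p) ^ (card T - card A))"
    by (rule gnp_marg[OF assms])
  also have "{A. A \<subseteq> T \<and> T \<subseteq> A} = {T}" by auto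
  finally show ?thesis by simp
qed

lemma gnp_upper:
  assumes "0 \<le> p" "p \<le> 1" "F \<subseteq> all_edges n"
  shows "gnp_prob n p (\<lambda>E. t \<le> card (E \<inter> F)) \<le> real (card F choose t) * p ^ t"
proof -
  have fF: "finite F" using assms finite_all_edges finite_subset by blast
  let ?I = "{T. T \<subseteq> F \<and> card T = t}"
  have "gnp_prob n p (\<lambda>E. t \<le> card (E \<inter> F)) \<le> gnp_prob n p (\<lambda>E. \<exists>T\<in>?I. T \<subseteq> E)"
  proof (rule gnp_mono[OF assms(1,2)])
    fix E assume "t \<le> card (E \<inter> F)"
    then obtain T where "T \<subseteq> E \<inter> F" "card T = t"
      by (meson obtain_subset_with_card_n)
    then show "\<exists>T\<in>?I. T \<subseteq> E" by auto
  qed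
  also have "\<dots> \<le> (\<Sum>T\<in>?I. gnp_prob n p (\<lambda>E. T \<subseteq> E))"
    using fF by (intro gnp_union assms) auto
  also have "\<dots> = (\<Sum>T\<in>?I. p ^ t)"
    using assms(3) by (intro sum.cong) (auto simp: gnp_subset)
  also have "\<dots> = real (card F choose t) * p ^ t"
    using n_subsets[OF fF] by simp
  finally show ?thesis .
qed

lemma gnp_lower:
  assumes "F \<subseteq> all_edges n"
  shows "gnp_prob n p (\<lambda>E. card (E \<inter> F) \<le> s) = (\<Sum>j\<le>s. real (card F choose j) * p ^ j * (1-p) ^ (card F - j))"
proof -
  have fF: "finite F" using assms finite_all_edges finite_subset by blast
  have "gnp_prob n p (\<lambda>E. card (E \<inter> F) \<le> s) = (\<Sum>A\<in>{A. A \<subseteq> F \<and> card A \<le> s}. p ^ card A * (1-p) ^ (card F - card A))"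
    by (rule gnp_marg[OF assms])
  also have "{A. A \<subseteq> F \<and> card A \<le> s} = (\<Union>j\<in>{..s}. {A. A \<subseteq> F \<and> card A = j})" by auto
  also have "(\<Sum>A\<in>(\<Union>j\<in>{..s}. {A. A \<subseteq> F \<and> card A = j}). p ^ card A * (1-p) ^ (card F - card A))
     = (\<Sum>j\<le>s. \<Sum>A\<in>{A. A \<subseteq> F \<and> card A = j}. p ^ card A * (1-p) ^ (card F - card A))"
    using fF by (intro sum.UNION_disjoint) auto
  also have "\<dots> = (\<Sum>j\<le>s. \<Sum>A\<in>{A. A \<subseteq> F \<and> card A = j}. p ^ j * (1-p) ^ (card F - j))"
    by (intro sum.cong) auto
  also have "\<dots> = (\<Sum>j\<le>s. real (card F choose j) * p ^ j * (1-p) ^ (card F - j))"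
    using n_subsets[OF fF] by (simp add: mult.assoc)
  finally show ?thesis .
qed



definition nb :: "nat set set \<Rightarrow> nat \<Rightarrow> nat set" where "nb E v = {u. {u, v} \<in> E}"
definition star :: "nat \<Rightarrow> nat \<Rightarrow> nat set set" where "star n v = (\<lambda>u. {u, v}) ` ({1..n} - {v})"
definition cutset :: "nat \<Rightarrow> nat set \<Rightarrow> nat set set" where
  "cutset n S = (\<lambda>(u,v). {u, v}) ` (S \<times> ({1..n} - S))"
definition ins :: "nat \<Rightarrow> nat set \<Rightarrow> nat set set" where "ins n S = {e \<in> all_edges n. e \<subseteq> S}"

lemma doubleton_inj: "{u, v} = {u', v} \<Longrightarrow> u = (u'::nat)"
  by (metis doubleton_eq_iff)

lemma all_edges_mem: "{u, v} \<in> all_edges n \<longleftrightarrow> u \<in> {1..n} \<and> v \<in> {1..n} \<and> u \<noteq> v"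
  unfolding all_edges_def by (auto simp: doubleton_eq_iff)

lemma nb_sub: "E \<subseteq> all_edges n \<Longrightarrow> nb E v \<subseteq> {1..n} - {v}"
  unfolding nb_def using all_edges_mem by blast

lemma star_sub: "v \<in> {1..n} \<Longrightarrow> star n v \<subseteq> all_edges n"
  unfolding star_def using all_edges_mem by auto

lemma card_star: "v \<in> {1..n} \<Longrightarrow> card (star n v) = n - 1"
  unfolding star_def by (subst card_image) (auto intro: inj_onI doubleton_inj)

lemma degree_star:
  assumes "E \<subseteq> all_edges n"
  shows "degree E v = card (E \<inter> star n v)"
proof -
  have "E \<inter> star n v = (\<lambda>u. {u, v}) ` nb E v"
    using nb_sub[OF assms, of v] unfolding star_def nb_def by auto
  moreover have "inj_on (\<lambda>u. {u, v}) (nb E v)" by (auto intro: inj_onI doubleton_inj)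
  ultimately show ?thesis unfolding degree_def nb_def[symmetric] by (simp add: card_image)
qed

lemma cutset_sub: "S \<subseteq> {1..n} \<Longrightarrow> cutset n S \<subseteq> all_edges n"
  unfolding cutset_def using all_edges_mem by fastforce

lemma card_cutset:
  assumes "S \<subseteq> {1..n}"
  shows "card (cutset n S) = card S * (n - card S)"
proof -
  have inj: "inj_on (\<lambda>(u,v). {u, v}) (S \<times> ({1..n} - S))"
    by (rule inj_onI) (auto simp: doubleton_eq_iff)
  have fS: "finite S" using assms finite_subset by blast
  have "card ({1..n} - S) = n - card S" using assms by (simp add: card_Diff_subset fS)
  then show ?thesis unfolding cutset_def using card_image[OF inj] by (simp add: card_cartesian_product)
qed

lemma cut_eq: "cut_edges E S S' = E \<inter> (\<lambda>(u,v). {u, v}) ` (S \<times> S')"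
  unfolding cut_edges_def by auto

lemma cut_sym:
  assumes "S \<subseteq> {1..n}"
  shows "cut_edges E S ({1..n} - S) = cut_edges E ({1..n} - S) ({1..n} - ({1..n} - S))"
proof -
  have "{1..n} - ({1..n} - S) = S" using assms by auto
  then show ?thesis unfolding cut_edges_def by (auto simp: insert_commute)
qed

lemma ins_sub: "ins n S \<subseteq> all_edges n" unfolding ins_def by auto

lemma card_ins: assumes "S \<subseteq> {1..n}" shows "card (ins n S) \<le> card S ^ 2"
proof -
  have fS: "finite S" using assms finite_subset by blast
  have "ins n S \<subseteq> (\<lambda>(u,v). {u, v}) ` (S \<times> S)"
    unfolding ins_def all_edges_def by auto
  then have "card (ins n S) \<le> card ((\<lambda>(u,v). {u, v}) ` (S \<times> S))"
    using fS by (intro card_mono) auto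
  also have "\<dots> \<le> card (S \<times> S)" by (rule card_image_le) (use fS in auto)
  finally show ?thesis by (simp add: card_cartesian_product power2_eq_square)
qed

lemma key_ineq:
  assumes E: "E \<subseteq> all_edges n" and S: "S \<subseteq> {1..n}"
  shows "(\<Sum>v\<in>S. degree E v) \<le> card (cut_edges E S ({1..n} - S)) + 2 * card (E \<inter> ins n S)"
proof -
  have fS: "finite S" using S finite_subset by blast
  have fE: "finite E" using E finite_all_edges finite_subset by blast
  let ?P = "SIGMA v:S. nb E v \<inter> ({1..n} - S)"
  let ?Q = "SIGMA v:S. nb E v \<inter> S"
  have d: "degree E v \<le> card (nb E v \<inter> ({1..n} - S)) + card (nb E v \<inter> S)" for v
  proof -
    have "nb E v = (nb E v \<inter> ({1..n} - S)) \<union> (nb E v \<inter> S)" using nb_sub[OF E, of v] by auto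
    then show ?thesis unfolding degree_def nb_def[symmetric] by (metis card_Un_le)
  qed
  have "(\<Sum>v\<in>S. degree E v) \<le> (\<Sum>v\<in>S. card (nb E v \<inter> ({1..n} - S))) + (\<Sum>v\<in>S. card (nb E v \<inter> S))"
    by (subst sum.distrib[symmetric]) (rule sum_mono[OF d])
  also have "(\<Sum>v\<in>S. card (nb E v \<inter> ({1..n} - S))) = card ?P"
    using fS by (subst card_SigmaI) auto
  also have "(\<Sum>v\<in>S. card (nb E v \<inter> S)) = card ?Q"
    using fS by (subst card_SigmaI) (auto intro: finite_subset)
  also have "card ?P \<le> card (cut_edges E S ({1..n} - S))"
  proof (rule card_inj_on_le)
    show "inj_on (\<lambda>(v,u). {u, v}) ?P" by (rule inj_onI) (auto simp: doubleton_eq_iff)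
    show "(\<lambda>(v,u). {u, v}) ` ?P \<subseteq> cut_edges E S ({1..n} - S)"
      unfolding cut_edges_def nb_def by (auto simp: insert_commute)
    show "finite (cut_edges E S ({1..n} - S))" unfolding cut_edges_def using fE by auto
  qed
  also have "card ?Q \<le> 2 * card (E \<inter> ins n S)"
  proof -
    let ?Q1 = "{x \<in> ?Q. fst x < snd x}" and ?Q2 = "{x \<in> ?Q. snd x < fst x}"
    have "?Q \<subseteq> ?Q1 \<union> ?Q2"
    proof
      fix x assume x: "x \<in> ?Q"
      then have "fst x \<noteq> snd x" using nb_sub[OF E, of "fst x"] by auto
      then show "x \<in> ?Q1 \<union> ?Q2" using x by auto
    qed
    have fQ: "finite ?Q" using fS by (auto intro: finite_subset)
    have "card ?Q \<le> card (?Q1 \<union> ?Q2)" by (rule card_mono) (use fQ \<open>?Q \<subseteq> _\<close> in auto)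
    also have "\<dots> \<le> card ?Q1 + card ?Q2" by (rule card_Un_le)
    also have "card ?Q1 \<le> card (E \<inter> ins n S)"
    proof (rule card_inj_on_le)
      show "inj_on (\<lambda>(v,u). {u, v}) ?Q1" by (rule inj_onI) (auto simp: doubleton_eq_iff)
      show "(\<lambda>(v,u). {u, v}) ` ?Q1 \<subseteq> E \<inter> ins n S"
        using E unfolding ins_def nb_def by auto
    qed (use fE in auto)
    also have "card ?Q2 \<le> card (E \<inter> ins n S)"
    proof (rule card_inj_on_le)
      show "inj_on (\<lambda>(v,u). {u, v}) ?Q2" by (rule inj_onI) (auto simp: doubleton_eq_iff)
      show "(\<lambda>(v,u). {u, v}) ` ?Q2 \<subseteq> E \<inter> ins n S"
        using E unfolding ins_def nb_def by auto
    qed (use fE in auto)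
    finally show ?thesis by simp
  qed
  finally show ?thesis by simp
qed

lemma min_degree_le: "v \<in> {1..n} \<Longrightarrow> min_degree n E \<le> degree E v"
  unfolding min_degree_def by (rule Min_le) auto

lemma min_degree_ex: "1 \<le> n \<Longrightarrow> \<exists>v\<in>{1..n}. min_degree n E = degree E v"
  unfolding min_degree_def
  by (metis (no_types, lifting) Min_in atLeastAtMost_iff empty_iff finite_atLeastAtMost finite_imageI image_iff image_is_empty order_refl)



lemma pow_fact_le_exp: "0 \<le> (x::real) \<Longrightarrow> x ^ k / fact k \<le> exp x"
proof -
  assume x: "0 \<le> x"
  have "x ^ k / fact k \<le> (\<Sum>n\<le>k. x ^ n / fact n)"
    using x by (intro member_le_sum) auto
  also have "\<dots> \<le> exp x"
    using x summable_exp_generic[of x]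
    by (auto simp: exp_def divide_inverse ac_simps intro!: sum_le_suminf)
  finally show ?thesis .
qed

lemma choose_le: "0 \<le> p \<Longrightarrow> real (m choose t) * p ^ t \<le> (real m * p) ^ t / fact t"
proof -
  assume p: "0 \<le> p"
  have "real (m choose t) * fact t \<le> real m ^ t"
    using binomial_fact_pow[of m t] by (metis of_nat_fact of_nat_le_iff of_nat_mult of_nat_power)
  then have "real (m choose t) \<le> real m ^ t / fact t" by (simp add: field_simps)
  then have "real (m choose t) * p ^ t \<le> real m ^ t / fact t * p ^ t"
    using p by (intro mult_right_mono) auto
  then show ?thesis by (simp add: power_mult_distrib)
qed

lemma pow_fact_le: assumes "0 \<le> x" "1 \<le> t" shows "x ^ t / fact t \<le> (exp 1 * x / real t) ^ t"
proof -
  have t: "real t > 0" using assms by simp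
  have "x ^ t / fact t = (x / t) ^ t * (real t ^ t / fact t)"
    using t by (simp add: power_divide)
  also have "\<dots> \<le> (x / t) ^ t * exp (real t)"
    using assms by (intro mult_left_mono pow_fact_le_exp) auto
  also have "exp (real t) = exp 1 ^ t" by (metis exp_of_nat_mult mult.right_neutral)
  also have "(x / t) ^ t * exp 1 ^ t = (exp 1 * x / real t) ^ t" by (simp add: power_mult_distrib[symmetric] mult.commute)
  finally show ?thesis .
qed

lemma one_minus_pow: assumes "0 \<le> p" "p \<le> 1" shows "(1 - p) ^ m \<le> exp (- (p * real m))"
proof -
  have "(1 - p) ^ m \<le> exp (- p) ^ m"
    using assms by (intro power_mono) (auto, metis add_uminus_conv_diff exp_ge_add_one_self)
  also have "\<dots> = exp (- (p * real m))" by (metis exp_of_nat_mult mult.commute mult_minus_left)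
  finally show ?thesis .
qed

lemma lower_sum_small:
  fixes p \<epsilon> :: real and N :: nat
  assumes p: "0 < p" "p \<le> 1" and e: "0 < \<epsilon>" "\<epsilon> \<le> 1"
  defines "D \<equiv> real N * p"
  shows "(\<Sum>j\<le>nat \<lfloor>\<epsilon> * D\<rfloor>. real (N choose j) * p ^ j * (1-p) ^ (N - j))
         \<le> (D + 1) * exp (- D * (1 - \<epsilon> * (2 + ln (1/\<epsilon>))))"
proof -
  let ?s = "nat \<lfloor>\<epsilon> * D\<rfloor>"
  let ?b = "exp (- D * (1 - \<epsilon> * (2 + ln (1/\<epsilon>))))"
  have D0: "0 \<le> D" using p unfolding D_def by simp
  have s_le: "real ?s \<le> \<epsilon> * D" using D0 e by (simp add: of_nat_nat)
  have l0: "0 \<le> ln (1/\<epsilon>)" using e by simp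
  have tm: "real (N choose j) * p ^ j * (1-p) ^ (N - j) \<le> ?b" if j: "j \<le> ?s" for j
  proof (cases "j \<le> N")
    case False then show ?thesis by (simp add: binomial_eq_0)
  next
    case True
    have jD: "real j \<le> \<epsilon> * D" using j s_le by linarith
    have a: "real (N choose j) * p ^ j \<le> D ^ j / fact j" using choose_le[of p N j] p unfolding D_def by simp
    have b: "(1-p) ^ (N - j) \<le> exp (- D + \<epsilon> * D)"
    proof -
      have "(1-p) ^ (N - j) \<le> exp (- (p * real (N - j)))" using one_minus_pow p by simp
      also have "- (p * real (N - j)) = - D + p * j" using True unfolding D_def by (simp add: of_nat_diff algebra_simps)
      also have "p * j \<le> \<epsilon> * D" using jD p
        by (smt (verit, best) mult_left_le_one_le of_nat_0_le_iff)
      then have "exp (- D + p * j) \<le> exp (- D + \<epsilon> * D)" by simp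
      finally show ?thesis by simp
    qed
    have c: "D ^ j / fact j \<le> exp (\<epsilon> * D * ln (1/\<epsilon>) + \<epsilon> * D)"
    proof -
      have "D ^ j / fact j = (1/\<epsilon>) ^ j * ((\<epsilon> * D) ^ j / fact j)"
        using e by (simp add: power_mult_distrib field_simps)
      also have "\<dots> \<le> (1/\<epsilon>) ^ j * exp (\<epsilon> * D)"
        using e D0 by (intro mult_left_mono pow_fact_le_exp) auto
      also have "(1/\<epsilon>) ^ j = exp (real j * ln (1/\<epsilon>))"
        using e by (simp add: exp_of_nat_mult)
      also have "exp (real j * ln (1/\<epsilon>)) \<le> exp (\<epsilon> * D * ln (1/\<epsilon>))"
        using jD l0 by (simp add: mult_right_mono)
      finally show ?thesis by (simp add: exp_add)
    qed
    have "real (N choose j) * p ^ j * (1-p) ^ (N - j) \<le> D ^ j / fact j * exp (- D + \<epsilon> * D)"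
      using a b p D0 by (intro mult_mono) auto
    also have "\<dots> \<le> exp (\<epsilon> * D * ln (1/\<epsilon>) + \<epsilon> * D) * exp (- D + \<epsilon> * D)"
      using c by (intro mult_right_mono) auto
    also have "\<dots> = ?b" by (simp add: exp_add[symmetric] algebra_simps)
    finally show ?thesis .
  qed
  have "(\<Sum>j\<le>?s. real (N choose j) * p ^ j * (1-p) ^ (N - j)) \<le> (\<Sum>j\<le>?s. ?b)"
    by (intro sum_mono tm) auto
  also have "\<dots> = (real ?s + 1) * ?b" by simp
  also have "\<dots> \<le> (D + 1) * ?b"
  proof (intro mult_right_mono)
    have "\<epsilon> * D \<le> D" using e D0 by (simp add: mult_left_le_one_le)
    then show "real ?s + 1 \<le> D + 1" using s_le by linarith
  qed simp
  finally show ?thesis .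
qed

lemma lower_sum_large:
  fixes p :: real
  assumes p: "0 \<le> p" "p \<le> 1" and N: "1 \<le> N"
  shows "(\<Sum>j\<le>s. real (N choose j) * p ^ j * (1-p) ^ (N - j))
         \<le> (real s + 1) * real N ^ s * exp (- p * real N + real s)"
proof -
  have tm: "real (N choose j) * p ^ j * (1-p) ^ (N - j) \<le> real N ^ s * exp (- p * real N + real s)"
    if j: "j \<le> s" for j
  proof (cases "j \<le> N")
    case False then show ?thesis by (simp add: binomial_eq_0)
  next
    case True
    have a: "real (N choose j) * p ^ j \<le> real N ^ s"
    proof -
      have "real (N choose j) * p ^ j \<le> real (N choose j) * 1"
        using p by (intro mult_left_mono power_le_one) auto
      also have "\<dots> \<le> real N ^ j" using binomial_le_pow[OF True] by (simp flip: of_nat_power)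
      also have "\<dots> \<le> real N ^ s" using N j by (intro power_increasing) auto
      finally show ?thesis .
    qed
    have b: "(1-p) ^ (N - j) \<le> exp (- p * real N + real s)"
    proof -
      have "(1-p) ^ (N - j) \<le> exp (- (p * real (N - j)))" using one_minus_pow p by simp
      also have "- (p * real (N - j)) = - p * N + p * j" using True by (simp add: of_nat_diff algebra_simps)
      also have "p * j \<le> real s" using j p
        by (smt (verit, best) mult_left_le_one_le of_nat_0_le_iff of_nat_le_iff)
      then have "exp (- p * N + p * j) \<le> exp (- p * real N + real s)" by simp
      finally show ?thesis .
    qed
    show ?thesis using a b p by (intro mult_mono) auto
  qed
  have "(\<Sum>j\<le>s. real (N choose j) * p ^ j * (1-p) ^ (N - j)) \<le> (\<Sum>j\<le>s. real N ^ s * exp (- p * real N + real s))"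
    by (intro sum_mono tm) auto
  also have "\<dots> = (real s + 1) * real N ^ s * exp (- p * real N + real s)" by simp
  finally show ?thesis .
qed



lemma P_min:
  fixes p \<epsilon> :: real
  assumes n: "2 \<le> n" and p: "0 < p" "p \<le> 1" and e: "0 < \<epsilon>" "\<epsilon> \<le> 1"
  defines "D \<equiv> real (n - 1) * p"
  shows "gnp_prob n p (\<lambda>E. \<exists>v\<in>{1..n}. real (card (E \<inter> star n v)) \<le> \<epsilon> * D)
         \<le> real n * ((D + 1) * exp (- D * (1 - \<epsilon> * (2 + ln (1/\<epsilon>)))))"
proof -
  let ?b = "(D + 1) * exp (- D * (1 - \<epsilon> * (2 + ln (1/\<epsilon>))))"
  have "gnp_prob n p (\<lambda>E. \<exists>v\<in>{1..n}. real (card (E \<inter> star n v)) \<le> \<epsilon> * D)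
       \<le> (\<Sum>v\<in>{1..n}. gnp_prob n p (\<lambda>E. real (card (E \<inter> star n v)) \<le> \<epsilon> * D))"
    using p by (intro gnp_union) auto
  also have "\<dots> \<le> (\<Sum>v\<in>{1..n}. ?b)"
  proof (rule sum_mono)
    fix v assume v: "v \<in> {1..n}"
    have D0: "0 \<le> \<epsilon> * D" using e p unfolding D_def by simp
    have "gnp_prob n p (\<lambda>E. real (card (E \<inter> star n v)) \<le> \<epsilon> * D)
        = gnp_prob n p (\<lambda>E. card (E \<inter> star n v) \<le> nat \<lfloor>\<epsilon> * D\<rfloor>)"
      by (rule gnp_cong) (use D0 in \<open>auto intro: le_nat_floor simp: le_nat_iff le_floor_iff\<close>)
    also have "\<dots> = (\<Sum>j\<le>nat \<lfloor>\<epsilon> * D\<rfloor>. real (card (star n v) choose j) * p ^ j * (1-p) ^ (card (star n v) - j))"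
      by (rule gnp_lower[OF star_sub[OF v]])
    also have "\<dots> \<le> ?b"
      using lower_sum_small[OF p e, of "n - 1"] card_star[OF v] unfolding D_def by simp
    finally show "gnp_prob n p (\<lambda>E. real (card (E \<inter> star n v)) \<le> \<epsilon> * D) \<le> ?b" .
  qed
  also have "\<dots> = real n * ?b" by simp
  finally show ?thesis .
qed

lemma P_deg:
  fixes p :: real
  assumes n: "2 \<le> n" and p: "0 < p" "p \<le> 1"
  defines "D \<equiv> real (n - 1) * p"
  shows "gnp_prob n p (\<lambda>E. nat \<lceil>9 * D\<rceil> \<le> card (E \<inter> star n 1)) \<le> exp (- 9 * D)"
proof -
  let ?t = "nat \<lceil>9 * D\<rceil>"
  have D0: "0 < D" using n p unfolding D_def by simp
  have t: "9 * D \<le> real ?t" by linarith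
  have t1: "1 \<le> ?t" using D0 by linarith
  have v: "1 \<in> {1..n}" using n by simp
  have "gnp_prob n p (\<lambda>E. ?t \<le> card (E \<inter> star n 1)) \<le> real (card (star n 1) choose ?t) * p ^ ?t"
    using p by (intro gnp_upper star_sub[OF v]) auto
  also have "\<dots> \<le> (real (card (star n 1)) * p) ^ ?t / fact ?t"
    using p by (intro choose_le) auto
  also have "\<dots> = D ^ ?t / fact ?t" using card_star[OF v] unfolding D_def by simp
  also have "\<dots> \<le> (exp 1 * D / real ?t) ^ ?t" using D0 t1 by (intro pow_fact_le) auto
  also have "\<dots> \<le> (exp (-1)) ^ ?t"
  proof (rule power_mono)
    have "exp 1 * D / real ?t \<le> exp 1 * D / (9 * D)"
      using D0 t by (intro divide_left_mono) auto
    also have "\<dots> = exp 1 / 9" using D0 by simp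
    also have "\<dots> \<le> exp (-1)"
    proof -
      have "exp 1 * exp 1 \<le> (3::real) * 3" using exp_le by (intro mult_mono) auto
      then show ?thesis by (simp add: exp_minus field_simps)
    qed
    finally show "exp 1 * D / real ?t \<le> exp (-1)" .
  qed (use D0 in simp)
  also have "\<dots> = exp (- real ?t)" by (metis exp_of_nat_mult mult_minus1_right)
  also have "\<dots> \<le> exp (- 9 * D)" using t by simp
  finally show ?thesis .
qed

lemma P_small:
  fixes p x :: real
  assumes p: "0 < p" "p \<le> 1" and S: "S \<subseteq> {1..n}" and t: "1 \<le> t"
  shows "gnp_prob n p (\<lambda>E. t \<le> card (E \<inter> ins n S)) \<le> (exp 1 * real (card S) ^ 2 * p / real t) ^ t"
proof -
  let ?m = "card (ins n S)"
  have "gnp_prob n p (\<lambda>E. t \<le> card (E \<inter> ins n S)) \<le> real (?m choose t) * p ^ t"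
    using p by (intro gnp_upper ins_sub) auto
  also have "\<dots> \<le> (real ?m * p) ^ t / fact t" using p by (intro choose_le) auto
  also have "\<dots> \<le> (exp 1 * (real ?m * p) / real t) ^ t" using p t by (intro pow_fact_le) auto
  also have "\<dots> \<le> (exp 1 * real (card S) ^ 2 * p / real t) ^ t"
  proof (rule power_mono)
    have "real ?m \<le> real (card S) ^ 2" using card_ins[OF S] by (metis of_nat_le_iff of_nat_power)
    then show "exp 1 * (real ?m * p) / real t \<le> exp 1 * real (card S) ^ 2 * p / real t"
      using p t by (intro divide_right_mono) (auto simp: mult.assoc intro!: mult_left_mono mult_right_mono)
  qed (use p in simp)
  finally show ?thesis .
qed

lemma P_large:
  fixes p :: real
  assumes p: "0 < p" "p \<le> 1" and S: "S \<subseteq> {1..n}" and N: "1 \<le> card S * (n - card S)"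
  shows "gnp_prob n p (\<lambda>E. card (E \<inter> cutset n S) \<le> s)
     \<le> (real s + 1) * real (card S * (n - card S)) ^ s * exp (- p * real (card S * (n - card S)) + real s)"
proof -
  define N where "N = card S * (n - card S)"
  have "gnp_prob n p (\<lambda>E. card (E \<inter> cutset n S) \<le> s) = (\<Sum>j\<le>s. real (N choose j) * p ^ j * (1-p) ^ (N - j))"
    using gnp_lower[OF cutset_sub[OF S], of p s] card_cutset[OF S] unfolding N_def by simp
  also have "\<dots> \<le> (real s + 1) * real N ^ s * exp (- p * real N + real s)"
    by (rule lower_sum_large) (use p N in \<open>auto simp: N_def\<close>)
  finally show ?thesis unfolding N_def .
qed



lemma small_claim:
  fixes \<epsilon> D :: real
  assumes E: "E \<subseteq> all_edges n" and S: "S \<subseteq> {1..n}" and k2: "2 \<le> card S"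
    and e: "card (E \<inter> ins n S) < nat \<lfloor>real (card S) * \<epsilon> * D / 8\<rfloor> + 1"
    and deg: "\<forall>v\<in>{1..n}. \<epsilon> * D < real (card (E \<inter> star n v))" and eD: "0 \<le> \<epsilon> * D"
  shows "1.5 * real (min_degree n E) \<le> real (card (cut_edges E S ({1..n} - S)))"
proof -
  let ?k = "card S" and ?d = "real (min_degree n E)"
  have "card S \<le> card {1..n}" using S by (intro card_mono) auto
  then have n1: "1 \<le> n" using k2 by simp
  obtain v0 where v0: "v0 \<in> {1..n}" "min_degree n E = degree E v0" using min_degree_ex[OF n1] by blast
  have dd: "\<epsilon> * D < ?d" using deg v0 degree_star[OF E] by simp
  have x0: "0 \<le> real ?k * \<epsilon> * D / 8" using eD by (simp add: mult.assoc)
  have e': "real (card (E \<inter> ins n S)) \<le> real ?k * \<epsilon> * D / 8"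
  proof -
    have "card (E \<inter> ins n S) \<le> nat \<lfloor>real ?k * \<epsilon> * D / 8\<rfloor>" using e by simp
    then have "real (card (E \<inter> ins n S)) \<le> real (nat \<lfloor>real ?k * \<epsilon> * D / 8\<rfloor>)" by simp
    also have "\<dots> = real_of_int \<lfloor>real ?k * \<epsilon> * D / 8\<rfloor>" using x0 by simp
    also have "\<dots> \<le> real ?k * \<epsilon> * D / 8" by (rule of_int_floor_le)
    finally show ?thesis .
  qed
  have "real ?k * ?d \<le> real (\<Sum>v\<in>S. degree E v)"
  proof -
    have "(\<Sum>v\<in>S. ?d) \<le> (\<Sum>v\<in>S. real (degree E v))"
    proof (intro sum_mono)
      fix v assume "v \<in> S"
      then have "v \<in> {1..n}" using S by blast
      then show "?d \<le> real (degree E v)" using min_degree_le by simp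
    qed
    then show ?thesis by simp
  qed
  also have "\<dots> \<le> real (card (cut_edges E S ({1..n} - S)) + 2 * card (E \<inter> ins n S))"
    using key_ineq[OF E S] by (simp only: of_nat_le_iff)
  also have "\<dots> = real (card (cut_edges E S ({1..n} - S))) + 2 * real (card (E \<inter> ins n S))"
    by simp
  finally have "real ?k * ?d \<le> real (card (cut_edges E S ({1..n} - S))) + real ?k * (\<epsilon> * D) / 4"
    using e' by simp
  moreover have "real ?k * (\<epsilon> * D) \<le> real ?k * ?d" using dd by (intro mult_left_mono) auto
  moreover have "1.5 * ?d \<le> real ?k * ?d * 3 / 4" using k2 
  proof -
    have "2 \<le> real ?k" using k2 by simp
    then have "2 * ?d \<le> real ?k * ?d" by (intro mult_right_mono) auto
    then show ?thesis by simp
  qed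
  ultimately show ?thesis by linarith
qed



lemma containment:
  fixes \<epsilon> D c :: real
  assumes E: "E \<subseteq> all_edges n" and eD: "0 \<le> \<epsilon> * D" and D0: "0 \<le> D" and c0: "0 < c"
    and nmin: "\<not> (\<exists>v\<in>{1..n}. real (card (E \<inter> star n v)) \<le> \<epsilon> * D)"
    and ndeg: "\<not> (nat \<lceil>9 * D\<rceil> \<le> card (E \<inter> star n 1))"
    and nsm: "\<not> (\<exists>k\<in>{k\<in>{2..n}. real k \<le> c * real n}. \<exists>S\<in>{S. S \<subseteq> {1..n} \<and> card S = k}.
                 nat \<lfloor>real k * \<epsilon> * D / 8\<rfloor> + 1 \<le> card (E \<inter> ins n S))"
    and nlg: "\<not> (\<exists>S\<in>{S\<in>Pow {1..n}. c * real n < real (card S) \<and> real (card S) < real n - c * real n}.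
                 card (E \<inter> cutset n S) \<le> nat \<lfloor>14 * D\<rfloor>)"
  shows "\<forall>S. S \<subset> {1..n} \<and> 2 \<le> card S \<and> card S \<le> n - 2 \<longrightarrow>
              real (card (cut_edges E S ({1..n} - S))) \<ge> 1.5 * real (min_degree n E)"
proof (intro allI impI, elim conjE)
  fix S assume Ss: "S \<subset> {1..n}" and k2: "2 \<le> card S" and kn: "card S \<le> n - 2"
  have S: "S \<subseteq> {1..n}" using Ss by auto
  have deg: "\<forall>v\<in>{1..n}. \<epsilon> * D < real (card (E \<inter> star n v))" using nmin by auto
  have cardc: "card ({1..n} - S) = n - card S" using S by (simp add: card_Diff_subset finite_subset)
  have n4: "4 \<le> n" using k2 kn by linarith
  show "real (card (cut_edges E S ({1..n} - S))) \<ge> 1.5 * real (min_degree n E)"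
  proof (cases "real (card S) \<le> c * real n")
    case True
    have m1: "card S \<in> {k\<in>{2..n}. real k \<le> c * real n}" using k2 kn True by simp
    have m2: "S \<in> {S'. S' \<subseteq> {1..n} \<and> card S' = card S}" using S by simp
    have "\<not> (nat \<lfloor>real (card S) * \<epsilon> * D / 8\<rfloor> + 1 \<le> card (E \<inter> ins n S))"
      using nsm m1 m2 by blast
    then have "card (E \<inter> ins n S) < nat \<lfloor>real (card S) * \<epsilon> * D / 8\<rfloor> + 1" by simp
    then show ?thesis using small_claim[OF E S k2 _ deg eD] by simp
  next
    case F1: False
    show ?thesis
    proof (cases "real n - c * real n \<le> real (card S)")
      case True
      let ?S' = "{1..n} - S"
      have S': "?S' \<subseteq> {1..n}" by auto
      have k2': "2 \<le> card ?S'" using cardc kn k2 by simp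
      have kc': "real (card ?S') \<le> c * real n" using cardc True kn by (simp add: of_nat_diff)
      have "card ?S' \<in> {2..n}" using k2' cardc by simp
      then have m1: "card ?S' \<in> {k\<in>{2..n}. real k \<le> c * real n}" using kc' by simp
      have m2: "?S' \<in> {S''. S'' \<subseteq> {1..n} \<and> card S'' = card ?S'}" using S' by simp
      have "\<not> (nat \<lfloor>real (card ?S') * \<epsilon> * D / 8\<rfloor> + 1 \<le> card (E \<inter> ins n ?S'))"
        using nsm m1 m2 by blast
      then have "card (E \<inter> ins n ?S') < nat \<lfloor>real (card ?S') * \<epsilon> * D / 8\<rfloor> + 1" by simp
      then have "1.5 * real (min_degree n E) \<le> real (card (cut_edges E ?S' ({1..n} - ?S')))"
        using small_claim[OF E S' k2' _ deg eD] by simp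
      then show ?thesis using cut_sym[OF S, of E] by simp
    next
      case False
      have "\<not> card (E \<inter> cutset n S) \<le> nat \<lfloor>14 * D\<rfloor>" using nlg S F1 False by auto
      then have "nat \<lfloor>14 * D\<rfloor> + 1 \<le> card (E \<inter> cutset n S)" by simp
      then have "real (nat \<lfloor>14 * D\<rfloor>) + 1 \<le> real (card (E \<inter> cutset n S))" by simp
      moreover have "real (nat \<lfloor>14 * D\<rfloor>) = real_of_int \<lfloor>14 * D\<rfloor>" using D0 by simp
      moreover have "14 * D < real_of_int \<lfloor>14 * D\<rfloor> + 1" by (rule real_of_int_floor_add_one_gt)
      ultimately have "14 * D < real (card (E \<inter> cutset n S))" by linarith
      moreover have "cut_edges E S ({1..n} - S) = E \<inter> cutset n S"
        unfolding cut_eq cutset_def ..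
      moreover have "real (min_degree n E) < 9 * D"
      proof -
        have "min_degree n E \<le> degree E 1" using n4 by (intro min_degree_le) auto
        also have "degree E 1 = card (E \<inter> star n 1)" by (rule degree_star[OF E])
        finally have "real (min_degree n E) \<le> real (card (E \<inter> star n 1))" by simp
        moreover have "real (card (E \<inter> star n 1)) < 9 * D" using ndeg by simp
        ultimately show ?thesis by linarith
      qed
      ultimately show ?thesis using D0 by simp
    qed
  qed
qed



lemma P_min_total:
  fixes p \<epsilon> \<gamma> \<eta> \<beta> \<theta> :: real
  assumes n: "2 \<le> n" and p: "0 < p" "p \<le> 1" and e: "0 < \<epsilon>" "\<epsilon> \<le> 1"
    and D: "\<gamma> * ln (real n) \<le> real (n - 1) * p"
    and he: "\<epsilon> * (2 + ln (1/\<epsilon>)) \<le> \<eta>" and b: "0 < \<beta>" "\<beta> \<le> 1" and hb: "0 \<le> 1 - \<eta> - \<beta>"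
    and g: "\<gamma> * (1 - \<eta> - \<beta>) = 1 + \<theta>"
  shows "gnp_prob n p (\<lambda>E. \<exists>v\<in>{1..n}. real (card (E \<inter> star n v)) \<le> \<epsilon> * (real (n - 1) * p))
         \<le> (1/\<beta>) * exp (- \<theta> * ln (real n))"
proof -
  define DD where "DD = real (n - 1) * p"
  have D0: "0 \<le> DD" using p unfolding DD_def by simp
  have ln0: "0 \<le> ln (real n)" using n by simp
  have "gnp_prob n p (\<lambda>E. \<exists>v\<in>{1..n}. real (card (E \<inter> star n v)) \<le> \<epsilon> * DD)
       \<le> real n * ((DD + 1) * exp (- DD * (1 - \<epsilon> * (2 + ln (1/\<epsilon>)))))"
    using P_min[OF n p e] unfolding DD_def by simp
  also have "(DD + 1) * exp (- DD * (1 - \<epsilon> * (2 + ln (1/\<epsilon>)))) \<le> 1 / \<beta> * exp (- (1 + \<theta>) * ln (real n))"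
  proof -
    have a: "exp (- DD * (1 - \<epsilon> * (2 + ln (1/\<epsilon>)))) \<le> exp (- DD * (1 - \<eta>))"
      using he D0 by (simp add: mult_left_mono)
    have b2: "exp (- DD * (1 - \<eta>)) = exp (- \<beta> * DD) * exp (- DD * (1 - \<eta> - \<beta>))"
      by (simp add: exp_add[symmetric] algebra_simps)
    have c: "(DD + 1) * exp (- \<beta> * DD) \<le> 1 / \<beta>"
    proof -
      have "\<beta> * (DD + 1) \<le> 1 + \<beta> * DD" using b by (simp add: algebra_simps)
      also have "\<dots> \<le> exp (\<beta> * DD)" by (rule exp_ge_add_one_self)
      finally have "\<beta> * (DD + 1) * exp (- \<beta> * DD) \<le> 1"
        by (simp add: exp_minus field_simps)
      then show ?thesis using b by (simp add: field_simps)
    qed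
    have d: "exp (- DD * (1 - \<eta> - \<beta>)) \<le> exp (- (1 + \<theta>) * ln (real n))"
    proof -
      have "(1 + \<theta>) * ln (real n) = \<gamma> * ln (real n) * (1 - \<eta> - \<beta>)" using g by (metis mult.commute mult.left_commute)
      also have "\<dots> \<le> DD * (1 - \<eta> - \<beta>)" using D hb unfolding DD_def by (intro mult_right_mono) auto
      finally show ?thesis by (metis exp_le_cancel_iff minus_mult_left neg_le_iff_le)
    qed
    have "(DD + 1) * exp (- DD * (1 - \<epsilon> * (2 + ln (1/\<epsilon>)))) \<le> (DD + 1) * exp (- DD * (1 - \<eta>))"
      using a D0 by (intro mult_left_mono) auto
    also have "\<dots> = ((DD + 1) * exp (- \<beta> * DD)) * exp (- DD * (1 - \<eta> - \<beta>))" using b2 by simp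
    also have "\<dots> \<le> 1 / \<beta> * exp (- (1 + \<theta>) * ln (real n))"
      using c d b by (intro mult_mono) auto
    finally show ?thesis .
  qed
  finally have 1: "gnp_prob n p (\<lambda>E. \<exists>v\<in>{1..n}. real (card (E \<inter> star n v)) \<le> \<epsilon> * DD)
     \<le> real n * (1 / \<beta> * exp (- (1 + \<theta>) * ln (real n)))"
    by (simp add: mult_left_mono)
  have "real n * exp (- (1 + \<theta>) * ln (real n)) = exp (ln (real n)) * exp (- (1 + \<theta>) * ln (real n))"
    using n by simp
  also have "\<dots> = exp (- \<theta> * ln (real n))" by (simp add: exp_add[symmetric] algebra_simps)
  finally have "real n * exp (- (1 + \<theta>) * ln (real n)) = exp (- \<theta> * ln (real n))" .
  then show ?thesis using 1 unfolding DD_def by (simp add: algebra_simps)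
qed



lemma small_term:
  fixes p \<epsilon> \<gamma> c :: real
  assumes n: "2 \<le> n" and p: "0 < p" and e: "0 < \<epsilon>" and g: "0 < \<gamma>" and c: "0 < c"
    and D: "\<gamma> * ln (real n) \<le> real (n - 1) * p" and k: "2 \<le> k" "real k \<le> c * real n"
    and hc: "16 * exp 1 * c / \<epsilon> \<le> exp (- 16 / (\<epsilon> * \<gamma>))"
  shows "(exp 1 * real k ^ 2 * p / real (nat \<lfloor>real k * \<epsilon> * (real (n - 1) * p) / 8\<rfloor> + 1))
           ^ (nat \<lfloor>real k * \<epsilon> * (real (n - 1) * p) / 8\<rfloor> + 1) \<le> exp (- 2 * real k * ln (real n))"
proof -
  define DD where "DD = real (n - 1) * p"
  define x where "x = real k * \<epsilon> * DD / 8"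
  define t where "t = nat \<lfloor>x\<rfloor> + 1"
  define \<rho> where "\<rho> = exp (- 16 / (\<epsilon> * \<gamma>))"
  have n1: "real (n - 1) \<ge> 1" using n by simp
  have DD0: "0 < DD" using n p unfolding DD_def by simp
  have x0: "0 < x" using DD0 e k unfolding x_def by simp
  have tx: "x < real t" unfolding t_def using x0 by linarith
  have t0: "0 < real t" using tx x0 by simp
  define r where "r = exp 1 * real k ^ 2 * p / real t"
  have r0: "0 \<le> r" unfolding r_def using p t0 by simp
  have "r \<le> exp 1 * real k ^ 2 * p / x"
    unfolding r_def using tx x0 p by (intro divide_left_mono) auto
  also have "\<dots> = 8 * exp 1 * real k / (\<epsilon> * real (n - 1))"
    unfolding x_def DD_def using p e k by (simp add: field_simps power2_eq_square)
  also have "\<dots> \<le> 8 * exp 1 * (c * real n) / (\<epsilon> * real (n - 1))"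
    using k e n1 by (intro divide_right_mono mult_left_mono) auto
  also have "\<dots> \<le> 16 * exp 1 * c / \<epsilon>"
  proof -
    have "real n \<le> 2 * real (n - 1)" using n by (simp add: of_nat_diff)
    then have "8 * exp 1 * (c * real n) \<le> (16 * exp 1 * c / \<epsilon>) * (\<epsilon> * real (n - 1))"
      using e c by (simp add: field_simps)
    then show ?thesis using e n1 by (simp add: divide_le_eq)
  qed
  also have "\<dots> \<le> \<rho>" unfolding \<rho>_def by (rule hc)
  finally have r\<rho>: "r \<le> \<rho>" .
  have "r ^ t \<le> \<rho> ^ t" using r0 r\<rho> by (intro power_mono) auto
  also have "\<rho> ^ t = exp (real t * (- 16 / (\<epsilon> * \<gamma>)))" unfolding \<rho>_def by (rule exp_of_nat_mult[symmetric])
  also have "\<dots> \<le> exp (x * (- 16 / (\<epsilon> * \<gamma>)))"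
  proof -
    have "0 \<le> 16 / (\<epsilon> * \<gamma>)" using e g by simp
    then have "x * (16 / (\<epsilon> * \<gamma>)) \<le> real t * (16 / (\<epsilon> * \<gamma>))" using tx by (intro mult_right_mono) auto
    then show ?thesis by simp
  qed
  also have "x * (- 16 / (\<epsilon> * \<gamma>)) = - 2 * real k * (DD / \<gamma>)"
    unfolding x_def using e g by (simp add: field_simps)
  also have "exp (- 2 * real k * (DD / \<gamma>)) \<le> exp (- 2 * real k * ln (real n))"
  proof -
    have "ln (real n) \<le> DD / \<gamma>" using D g unfolding DD_def by (simp add: field_simps)
    then have "2 * real k * ln (real n) \<le> 2 * real k * (DD / \<gamma>)" by (intro mult_left_mono) auto
    then show ?thesis by simp
  qed
  finally show ?thesis unfolding r_def t_def x_def DD_def .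
qed

lemma P_small_total:
  fixes p \<epsilon> \<gamma> c :: real
  assumes n: "2 \<le> n" and p: "0 < p" "p \<le> 1" and e: "0 < \<epsilon>" and g: "0 < \<gamma>" and c: "0 < c"
    and D: "\<gamma> * ln (real n) \<le> real (n - 1) * p"
    and hc: "16 * exp 1 * c / \<epsilon> \<le> exp (- 16 / (\<epsilon> * \<gamma>))"
  shows "gnp_prob n p (\<lambda>E. \<exists>k\<in>{k\<in>{2..n}. real k \<le> c * real n}. \<exists>S\<in>{S. S \<subseteq> {1..n} \<and> card S = k}.
                 nat \<lfloor>real k * \<epsilon> * (real (n - 1) * p) / 8\<rfloor> + 1 \<le> card (E \<inter> ins n S))
         \<le> exp (- ln (real n))"
proof -
  let ?I = "{k\<in>{2..n}. real k \<le> c * real n}"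
  let ?t = "\<lambda>k. nat \<lfloor>real k * \<epsilon> * (real (n - 1) * p) / 8\<rfloor> + 1"
  have ln0: "0 \<le> ln (real n)" using n by simp
  have "gnp_prob n p (\<lambda>E. \<exists>k\<in>?I. \<exists>S\<in>{S. S \<subseteq> {1..n} \<and> card S = k}. ?t k \<le> card (E \<inter> ins n S))
     \<le> (\<Sum>k\<in>?I. gnp_prob n p (\<lambda>E. \<exists>S\<in>{S. S \<subseteq> {1..n} \<and> card S = k}. ?t k \<le> card (E \<inter> ins n S)))"
    using p by (intro gnp_union) auto
  also have "\<dots> \<le> (\<Sum>k\<in>?I. exp (- 2 * ln (real n)))"
  proof (rule sum_mono)
    fix k assume kI: "k \<in> ?I"
    have "gnp_prob n p (\<lambda>E. \<exists>S\<in>{S. S \<subseteq> {1..n} \<and> card S = k}. ?t k \<le> card (E \<inter> ins n S))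
       \<le> (\<Sum>S\<in>{S. S \<subseteq> {1..n} \<and> card S = k}. gnp_prob n p (\<lambda>E. ?t k \<le> card (E \<inter> ins n S)))"
      using p by (intro gnp_union) auto
    also have "\<dots> \<le> (\<Sum>S\<in>{S. S \<subseteq> {1..n} \<and> card S = k}. exp (- 2 * real k * ln (real n)))"
    proof (rule sum_mono)
      fix S assume "S \<in> {S. S \<subseteq> {1..n} \<and> card S = k}"
      then have S: "S \<subseteq> {1..n}" "card S = k" by auto
      have "gnp_prob n p (\<lambda>E. ?t k \<le> card (E \<inter> ins n S)) \<le> (exp 1 * real (card S) ^ 2 * p / real (?t k)) ^ ?t k"
        using P_small[OF p S(1), of "?t k"] by simp
      also have "\<dots> \<le> exp (- 2 * real k * ln (real n))"
        using small_term[OF n p(1) e g c D _ _ hc, of k] kI S by simp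
      finally show "gnp_prob n p (\<lambda>E. ?t k \<le> card (E \<inter> ins n S)) \<le> exp (- 2 * real k * ln (real n))" .
    qed
    also have "\<dots> = real (n choose k) * exp (- 2 * real k * ln (real n))"
      using n_subsets[of "{1..n}" k] by simp
    also have "\<dots> \<le> real n ^ k * exp (- 2 * real k * ln (real n))"
    proof -
      have "n choose k \<le> n ^ k" using kI by (intro binomial_le_pow) auto
      then have "real (n choose k) \<le> real n ^ k" by (metis of_nat_le_iff of_nat_power)
      then show ?thesis by (intro mult_right_mono) auto
    qed
    also have "real n ^ k = exp (real k * ln (real n))" using n by (simp add: exp_of_nat_mult)
    also have "exp (real k * ln (real n)) * exp (- 2 * real k * ln (real n)) = exp (- real k * ln (real n))"
      by (simp add: exp_add[symmetric] algebra_simps)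
    also have "\<dots> \<le> exp (- 2 * ln (real n))"
    proof -
      have "2 * ln (real n) \<le> real k * ln (real n)" using kI ln0 by (intro mult_right_mono) auto
      then show ?thesis by simp
    qed
    finally show "gnp_prob n p (\<lambda>E. \<exists>S\<in>{S. S \<subseteq> {1..n} \<and> card S = k}. ?t k \<le> card (E \<inter> ins n S))
         \<le> exp (- 2 * ln (real n))" .
  qed
  also have "\<dots> = real (card ?I) * exp (- 2 * ln (real n))" by simp
  also have "\<dots> \<le> real n * exp (- 2 * ln (real n))"
  proof -
    have "card ?I \<le> card {1..n}" by (intro card_mono) auto
    then show ?thesis by (intro mult_right_mono) auto
  qed
  also have "\<dots> = exp (ln (real n)) * exp (- 2 * ln (real n))" using n by simp
  also have "\<dots> = exp (- ln (real n))" by (simp add: exp_add[symmetric] algebra_simps)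
  finally show ?thesis .
qed



lemma large_term:
  fixes p c :: real
  assumes n: "2 \<le> n" and p: "0 < p" "p \<le> 1" and c: "0 < c"
    and D1: "1 \<le> real (n - 1) * p" and hn: "29 + 28 * ln (real n) \<le> c * real n / 4"
    and k1: "c * real n < real k" and k2: "real k < real n - c * real n"
  shows "(real (nat \<lfloor>14 * (real (n - 1) * p)\<rfloor>) + 1) * real (k * (n - k)) ^ (nat \<lfloor>14 * (real (n - 1) * p)\<rfloor>)
          * exp (- p * real (k * (n - k)) + real (nat \<lfloor>14 * (real (n - 1) * p)\<rfloor>))
         \<le> exp (- (c * real n * (real (n - 1) * p) / 4))"
proof -
  define DD where "DD = real (n - 1) * p"
  define s where "s = nat \<lfloor>14 * DD\<rfloor>"
  have cn0': "0 \<le> c * real n" using c by simp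
  have "real k < real n" using k2 cn0' by linarith
  then have kn: "k < n" by simp
  have NR: "real (k * (n - k)) = real k * (real n - real k)" using kn by (simp add: of_nat_diff)
  have DD0: "0 \<le> DD" unfolding DD_def using D1 by linarith
  have "real s = real_of_int \<lfloor>14 * DD\<rfloor>" unfolding s_def using DD0 by simp
  also have "\<dots> \<le> 14 * DD" by (rule of_int_floor_le)
  finally have sD: "real s \<le> 14 * DD" .
  have s0: "0 \<le> real s" by simp
  have cn0: "0 < c * real n" using c n by simp
  have k1': "1 \<le> real k"
  proof -
    have "0 < real k" using k1 cn0 by linarith
    then show ?thesis by simp
  qed
  have nk1: "1 \<le> real n - real k"
  proof -
    have "real (n - k) = real n - real k" using kn by (simp add: of_nat_diff)
    moreover have "1 \<le> real (n - k)" using kn by simp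
    ultimately show ?thesis by simp
  qed
  have N1: "1 \<le> real k * (real n - real k)"
  proof -
    have "1 * 1 \<le> real k * (real n - real k)" by (rule mult_mono) (use k1' nk1 in auto)
    then show ?thesis by simp
  qed
  have Nlow: "c * real n * real n / 2 \<le> real k * (real n - real k)"
  proof (cases "real k \<le> real n - real k")
    case True
    then have h: "real n / 2 \<le> real n - real k" by simp
    have "c * real n * (real n / 2) \<le> real k * (real n - real k)"
      by (rule mult_mono) (use k1 cn0 h in auto)
    then show ?thesis by simp
  next
    case False
    then have h: "real n / 2 \<le> real k" by simp
    have h2: "c * real n \<le> real n - real k" using k2 by simp
    have "c * real n * (real n / 2) \<le> (real n - real k) * real k"
      by (rule mult_mono) (use cn0 h h2 in auto)
    then show ?thesis by (simp add: mult.commute)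
  qed
  have Nup: "real k * (real n - real k) \<le> real n ^ 2"
  proof -
    have "real k * (real n - real k) \<le> real n * real n"
      by (rule mult_mono) (use kn nk1 in auto)
    then show ?thesis by (simp add: power2_eq_square)
  qed
  have a: "real s + 1 \<le> exp (15 * DD)"
  proof -
    have "real s + 1 \<le> 1 + 15 * DD" using sD D1 DD_def by simp
    also have "\<dots> \<le> exp (15 * DD)" by (rule exp_ge_add_one_self)
    finally show ?thesis .
  qed
  have b: "(real k * (real n - real k)) ^ s \<le> exp (28 * DD * ln (real n))"
  proof -
    have "(real k * (real n - real k)) ^ s = exp (real s * ln (real k * (real n - real k)))"
      using N1 by (simp add: exp_of_nat_mult)
    also have "ln (real k * (real n - real k)) \<le> 2 * ln (real n)"
    proof -
      have "ln (real k * (real n - real k)) \<le> ln (real n ^ 2)" by (subst ln_le_cancel_iff) (use N1 Nup n in auto)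
      also have "\<dots> = 2 * ln (real n)" using n by (simp add: ln_realpow)
      finally show ?thesis .
    qed
    then have "real s * ln (real k * (real n - real k)) \<le> 14 * DD * (2 * ln (real n))"
      using sD N1 n by (intro mult_mono) auto
    then have "exp (real s * ln (real k * (real n - real k))) \<le> exp (28 * DD * ln (real n))" by simp
    finally show ?thesis .
  qed
  have cc: "exp (- p * (real k * (real n - real k)) + real s) \<le> exp (- (c * real n * DD / 2) + 14 * DD)"
  proof -
    have "c * real n * DD / 2 = p * (c * real n * real (n - 1) / 2)" unfolding DD_def by simp
    also have "\<dots> \<le> p * (c * real n * real n / 2)"
    proof -
      have "real (n - 1) \<le> real n" by simp
      then have "c * real n * real (n - 1) \<le> c * real n * real n" using cn0 by (intro mult_left_mono) auto
      then show ?thesis using p by (intro mult_left_mono) auto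
    qed
    also have "\<dots> \<le> p * (real k * (real n - real k))" using Nlow p by (intro mult_left_mono) auto
    finally show ?thesis using sD by simp
  qed
  have "(real s + 1) * (real k * (real n - real k)) ^ s * exp (- p * (real k * (real n - real k)) + real s)
     \<le> exp (15 * DD) * exp (28 * DD * ln (real n)) * exp (- (c * real n * DD / 2) + 14 * DD)"
    using a b cc N1 by (intro mult_mono) auto
  also have "\<dots> = exp (DD * (29 + 28 * ln (real n)) - c * real n * DD / 2)"
    by (simp add: exp_add[symmetric] algebra_simps)
  also have "\<dots> \<le> exp (- (c * real n * DD / 4))"
  proof -
    have "DD * (29 + 28 * ln (real n)) \<le> DD * (c * real n / 4)" using hn DD0 by (intro mult_left_mono) auto
    moreover have "DD * (c * real n / 4) = c * real n * DD / 4" by (simp add: algebra_simps)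
    ultimately have "DD * (29 + 28 * ln (real n)) - c * real n * DD / 2 \<le> - (c * real n * DD / 4)" by linarith
    then show ?thesis by (simp only: exp_le_cancel_iff)
  qed
  finally show ?thesis unfolding s_def DD_def NR .
qed

lemma P_large_total:
  fixes p c :: real
  assumes n: "2 \<le> n" and p: "0 < p" "p \<le> 1" and c: "0 < c"
    and D1: "1 \<le> real (n - 1) * p" and hn: "29 + 28 * ln (real n) \<le> c * real n / 4"
    and D8: "8 / c \<le> real (n - 1) * p"
  shows "gnp_prob n p (\<lambda>E. \<exists>S\<in>{S\<in>Pow {1..n}. c * real n < real (card S) \<and> real (card S) < real n - c * real n}.
                 card (E \<inter> cutset n S) \<le> nat \<lfloor>14 * (real (n - 1) * p)\<rfloor>)
         \<le> exp (- ln (real n))"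
proof -
  define DD where "DD = real (n - 1) * p"
  let ?I = "{S\<in>Pow {1..n}. c * real n < real (card S) \<and> real (card S) < real n - c * real n}"
  let ?s = "nat \<lfloor>14 * DD\<rfloor>"
  have "gnp_prob n p (\<lambda>E. \<exists>S\<in>?I. card (E \<inter> cutset n S) \<le> ?s)
     \<le> (\<Sum>S\<in>?I. gnp_prob n p (\<lambda>E. card (E \<inter> cutset n S) \<le> ?s))"
    using p by (intro gnp_union) auto
  also have "\<dots> \<le> (\<Sum>S\<in>?I. exp (- (c * real n * DD / 4)))"
  proof (rule sum_mono)
    fix S assume SI: "S \<in> ?I"
    then have S: "S \<subseteq> {1..n}" by auto
    have cn: "0 < c * real n" using c n by simp
    have "real (card S) < real n" using SI cn by auto
    then have kn: "card S < n" by simp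
    have "0 < real (card S)" using SI cn by auto
    then have k0: "0 < card S" by simp
    have N1: "1 \<le> card S * (n - card S)" using kn k0 by simp
    have "gnp_prob n p (\<lambda>E. card (E \<inter> cutset n S) \<le> ?s)
        \<le> (real ?s + 1) * real (card S * (n - card S)) ^ ?s * exp (- p * real (card S * (n - card S)) + real ?s)"
      by (rule P_large[OF p S N1])
    also have "\<dots> \<le> exp (- (c * real n * DD / 4))"
      using large_term[OF n p c D1 hn, of "card S"] SI unfolding DD_def by simp
    finally show "gnp_prob n p (\<lambda>E. card (E \<inter> cutset n S) \<le> ?s) \<le> exp (- (c * real n * DD / 4))" .
  qed
  also have "\<dots> = real (card ?I) * exp (- (c * real n * DD / 4))" by simp
  also have "\<dots> \<le> 2 ^ n * exp (- (c * real n * DD / 4))"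
  proof -
    have "card ?I \<le> card (Pow {1..n})" by (intro card_mono) auto
    also have "\<dots> = 2 ^ n" by (simp add: card_Pow)
    finally have "card ?I \<le> 2 ^ n" .
    then have "real (card ?I) \<le> real (2 ^ n)" by (simp only: of_nat_le_iff)
    then have "real (card ?I) \<le> 2 ^ n" by simp
    then show ?thesis by (intro mult_right_mono) auto
  qed
  also have "\<dots> \<le> exp (real n) * exp (- (2 * real n))"
  proof (intro mult_mono)
    have "(2::real) \<le> exp 1" using exp_ge_add_one_self[of 1] by simp
    then have "(2::real) ^ n \<le> exp 1 ^ n" by (intro power_mono) auto
    then show "(2::real) ^ n \<le> exp (real n)" by (metis exp_of_nat_mult mult.right_neutral)
    have "8/c \<le> DD" using D8 unfolding DD_def .
    then have "c*(8/c) \<le> c*DD" using c by (intro mult_left_mono) auto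
    then have h8: "8 \<le> c * DD" using c by simp
    then have "8 * real n \<le> c * DD * real n" by (intro mult_right_mono) auto
    moreover have "c * real n * DD / 4 = (c * DD * real n) / 4" by (simp add: mult_ac)
    ultimately have "2 * real n \<le> c * real n * DD / 4" by linarith
    then show "exp (- (c * real n * DD / 4)) \<le> exp (- (2 * real n))" by simp
  qed auto
  also have "\<dots> = exp (- real n)" by (simp add: exp_add[symmetric])
  also have "\<dots> \<le> exp (- ln (real n))"
    using ln_le_minus_one[of "real n"] n by simp
  finally show ?thesis unfolding DD_def .
qed



lemma ln_le_2sqrt: "1 \<le> x \<Longrightarrow> ln x \<le> 2 * sqrt x"
proof -
  assume x: "1 \<le> x"
  have "ln (sqrt x) \<le> sqrt x - 1" using x by (intro ln_le_minus_one) auto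
  moreover have "ln (sqrt x) = ln x / 2" using x by (simp add: ln_sqrt)
  ultimately show ?thesis by simp
qed

lemma eps_bound:
  fixes u :: real
  assumes u: "0 < u" "u \<le> 1"
  shows "u ^ 2 * (2 + ln (1 / u ^ 2)) \<le> 4 * u"
proof -
  have "ln (1 / u ^ 2) = 2 * ln (1 / u)" using u by (simp add: ln_div ln_realpow)
  also have "ln (1 / u) \<le> 1 / u - 1" using u by (intro ln_le_minus_one) auto
  finally have l: "ln (1 / u ^ 2) \<le> 2 / u" by (simp add: field_simps)
  have "u ^ 2 * (2 + ln (1 / u ^ 2)) \<le> u ^ 2 * (2 + 2 / u)"
    using l by (intro mult_left_mono) auto
  also have "\<dots> = 2 * u ^ 2 + 2 * u" using u by (simp add: field_simps power2_eq_square)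
  also have "\<dots> \<le> 4 * u" using u by (simp add: power2_eq_square mult_left_le_one_le)
  finally show ?thesis .
qed

theorem lemma4p15:
  fixes \<gamma> :: real
  assumes "\<gamma> > 1"
  shows "\<exists>C > 0. \<exists>N. \<forall>n \<ge> N. \<forall>p :: real.
           \<gamma> * ln (real n) / (real n - 1) \<le> p \<and> p \<le> 1 \<longrightarrow>
           gnp_prob n p (\<lambda>E. \<forall>S. S \<subset> {1..n} \<and> 2 \<le> card S \<and> card S \<le> n - 2 \<longrightarrow>
              real (card (cut_edges E S ({1..n} - S))) \<ge> 1.5 * real (min_degree n E))
           \<ge> 1 - real n powr (- C)"
proof -
  have g1: "1 < \<gamma>" using assms .
  define \<theta> where "\<theta> = (\<gamma> - 1) / 4"
  define \<eta> where "\<eta> = (\<gamma> - 1) / (2 * \<gamma>)"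
  define u where "u = \<eta> / 4"
  define \<epsilon> where "\<epsilon> = u ^ 2"
  define \<beta> where "\<beta> = \<theta> / \<gamma>"
  define c where "c = \<epsilon> * exp (- 16 / (\<epsilon> * \<gamma>)) / (16 * exp 1)"
  define C where "C = min \<theta> 1 / 2"
  have \<theta>0: "0 < \<theta>" using g1 unfolding \<theta>_def by simp
  have \<eta>0: "0 < \<eta>" "\<eta> \<le> 1" using g1 unfolding \<eta>_def by (auto simp: field_simps)
  have u0: "0 < u" "u \<le> 1" using \<eta>0 unfolding u_def by auto
  have e0: "0 < \<epsilon>" "\<epsilon> \<le> 1" using u0 unfolding \<epsilon>_def by (auto simp: power_le_one)
  have he: "\<epsilon> * (2 + ln (1/\<epsilon>)) \<le> \<eta>"
    using eps_bound[OF u0] unfolding \<epsilon>_def u_def by simp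
  have b0: "0 < \<beta>" "\<beta> \<le> 1" using g1 unfolding \<beta>_def \<theta>_def by (auto simp: field_simps)
  have hb: "0 \<le> 1 - \<eta> - \<beta>" using g1 unfolding \<eta>_def \<beta>_def \<theta>_def by (auto simp: field_simps)
  have hg: "\<gamma> * (1 - \<eta> - \<beta>) = 1 + \<theta>" using g1 unfolding \<eta>_def \<beta>_def \<theta>_def by (auto simp: field_simps)
  have c0: "0 < c" using e0 unfolding c_def by simp
  have hc: "16 * exp 1 * c / \<epsilon> \<le> exp (- 16 / (\<epsilon> * \<gamma>))" using e0 unfolding c_def by simp
  have C0: "0 < C" "2 * C \<le> \<theta>" "2 * C \<le> 1" using \<theta>0 unfolding C_def by auto
  define K where "K = max 1 (max (8 / c) (ln (1 / \<beta> + 3) / C))"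
  define N where "N = nat \<lceil>exp K\<rceil> + nat \<lceil>(340 / c) ^ 2\<rceil> + 3"
  show ?thesis
  proof (intro exI[of _ C] conjI C0 exI[of _ N] allI impI, elim conjE)
    fix n :: nat and p :: real
    assume nN: "N \<le> n" and hp: "\<gamma> * ln (real n) / (real n - 1) \<le> p" and p1: "p \<le> 1"
    have n3: "3 \<le> n" using nN unfolding N_def by simp
    have n2: "2 \<le> n" using n3 by simp
    have nK: "exp K \<le> real n" using nN unfolding N_def by linarith
    have lnK: "K \<le> ln (real n)"
    proof -
      have "ln (exp K) \<le> ln (real n)" using nK n3 by (subst ln_le_cancel_iff) auto
      then show ?thesis by simp
    qed
    have ln1: "1 \<le> ln (real n)" and ln8: "8 / c \<le> ln (real n)" and lnC: "ln (1 / \<beta> + 3) / C \<le> ln (real n)"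
      using lnK unfolding K_def by auto
    have n1r: "0 < real n - 1" using n3 by simp
    have D: "\<gamma> * ln (real n) \<le> real (n - 1) * p"
    proof -
      have "real (n - 1) = real n - 1" using n3 by (simp add: of_nat_diff)
      then show ?thesis using hp n1r by (simp add: divide_le_eq mult.commute)
    qed
    have gl: "ln (real n) \<le> \<gamma> * ln (real n)" using g1 ln1 by simp
    have D1: "1 \<le> real (n - 1) * p" using D gl ln1 by linarith
    have D8: "8 / c \<le> real (n - 1) * p" using D gl ln8 by linarith
    have p0: "0 < p"
    proof -
      have "0 < real (n - 1) * p" using D1 by linarith
      then show ?thesis using n3 by (simp add: zero_less_mult_iff)
    qed
    have hn: "29 + 28 * ln (real n) \<le> c * real n / 4"
    proof -
      have n340: "(340 / c) ^ 2 \<le> real n" using nN unfolding N_def by linarith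
      have sq: "340 / c \<le> sqrt (real n)" using n340 c0 by (simp add: real_le_rsqrt)
      have s1: "1 \<le> sqrt (real n)" using n3 by simp
      have "29 + 28 * ln (real n) \<le> 29 + 56 * sqrt (real n)" using ln_le_2sqrt[of "real n"] n3 by simp
      also have "\<dots> \<le> 85 * sqrt (real n)" using s1 by simp
      also have "\<dots> \<le> c * real n / 4"
      proof -
        have "340 \<le> c * sqrt (real n)" using sq c0 by (simp add: field_simps)
        then have "340 * sqrt (real n) \<le> c * sqrt (real n) * sqrt (real n)" using s1 by (intro mult_right_mono) auto
        also have "c * sqrt (real n) * sqrt (real n) = c * real n" by (simp add: mult.assoc)
        finally show ?thesis by simp
      qed
      finally show ?thesis .
    qed
    define Good where "Good = (\<lambda>E. \<forall>S. S \<subset> {1..n} \<and> 2 \<le> card S \<and> card S \<le> n - 2 \<longrightarrow>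
              real (card (cut_edges E S ({1..n} - S))) \<ge> 1.5 * real (min_degree n E))"
    define DD where "DD = real (n - 1) * p"
    define B1 where "B1 = (\<lambda>E. \<exists>v\<in>{1..n}. real (card (E \<inter> star n v)) \<le> \<epsilon> * DD)"
    define B2 where "B2 = (\<lambda>E. nat \<lceil>9 * DD\<rceil> \<le> card (E \<inter> star n 1))"
    define B3 where "B3 = (\<lambda>E. \<exists>k\<in>{k\<in>{2..n}. real k \<le> c * real n}. \<exists>S\<in>{S. S \<subseteq> {1..n} \<and> card S = k}.
                 nat \<lfloor>real k * \<epsilon> * DD / 8\<rfloor> + 1 \<le> card (E \<inter> ins n S))"
    define B4 where "B4 = (\<lambda>E. \<exists>S\<in>{S\<in>Pow {1..n}. c * real n < real (card S) \<and> real (card S) < real n - c * real n}.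
                 card (E \<inter> cutset n S) \<le> nat \<lfloor>14 * DD\<rfloor>)"
    have DD0: "0 \<le> DD" using D1 unfolding DD_def by linarith
    have P1: "gnp_prob n p B1 \<le> (1/\<beta>) * exp (- \<theta> * ln (real n))"
      unfolding B1_def DD_def by (rule P_min_total[OF n2 p0 p1 e0 D he b0 hb hg])
    have P2: "gnp_prob n p B2 \<le> exp (- ln (real n))"
    proof -
      have "gnp_prob n p B2 \<le> exp (- 9 * DD)" unfolding B2_def DD_def by (rule P_deg[OF n2 p0 p1])
      also have "\<dots> \<le> exp (- ln (real n))"
      proof -
        have "ln (real n) \<le> 9 * DD" using D gl ln1 unfolding DD_def by linarith
        then show ?thesis by simp
      qed
      finally show ?thesis .
    qed
    have P3: "gnp_prob n p B3 \<le> exp (- ln (real n))"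
      unfolding B3_def DD_def using g1 by (intro P_small_total[OF n2 p0 p1 e0(1) _ c0 D hc]) auto
    have P4: "gnp_prob n p B4 \<le> exp (- ln (real n))"
      unfolding B4_def DD_def by (rule P_large_total[OF n2 p0 p1 c0 D1 hn D8])
    have cont: "\<not> Good E \<Longrightarrow> B1 E \<or> B2 E \<or> B3 E \<or> B4 E" if E: "E \<subseteq> all_edges n" for E
    proof (rule ccontr)
      assume ng: "\<not> Good E" and nb: "\<not> (B1 E \<or> B2 E \<or> B3 E \<or> B4 E)"
      have "Good E" unfolding Good_def
        by (rule containment[OF E _ DD0 c0]) (use nb e0 DD0 in \<open>auto simp: B1_def B2_def B3_def B4_def\<close>)
      then show False using ng by simp
    qed
    have "gnp_prob n p (\<lambda>E. \<not> Good E) \<le> gnp_prob n p (\<lambda>E. B1 E \<or> B2 E \<or> B3 E \<or> B4 E)"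
      using p0 p1 cont by (intro gnp_mono) auto
    also have "\<dots> \<le> gnp_prob n p B1 + gnp_prob n p (\<lambda>E. B2 E \<or> B3 E \<or> B4 E)"
      using p0 p1 by (intro gnp_disj) auto
    also have "gnp_prob n p (\<lambda>E. B2 E \<or> B3 E \<or> B4 E) \<le> gnp_prob n p B2 + gnp_prob n p (\<lambda>E. B3 E \<or> B4 E)"
      using p0 p1 by (intro gnp_disj) auto
    also have "gnp_prob n p (\<lambda>E. B3 E \<or> B4 E) \<le> gnp_prob n p B3 + gnp_prob n p B4"
      using p0 p1 by (intro gnp_disj) auto
    finally have bad: "gnp_prob n p (\<lambda>E. \<not> Good E) \<le> (1/\<beta>) * exp (- \<theta> * ln (real n)) + 3 * exp (- ln (real n))"
      using P1 P2 P3 P4 by linarith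
    have L0: "0 \<le> ln (real n)" using ln1 by simp
    have e1: "exp (- \<theta> * ln (real n)) \<le> exp (- (2 * C) * ln (real n))"
      using C0 L0 by (simp add: mult_right_mono)
    have e2: "exp (- ln (real n)) \<le> exp (- (2 * C) * ln (real n))"
      using C0 L0 by (simp add: mult_right_mono mult_left_le_one_le)
    have "(1/\<beta>) * exp (- \<theta> * ln (real n)) + 3 * exp (- ln (real n))
          \<le> (1/\<beta>) * exp (- (2 * C) * ln (real n)) + 3 * exp (- (2 * C) * ln (real n))"
      using e1 e2 b0 by (intro add_mono mult_left_mono) auto
    also have "\<dots> = (1/\<beta> + 3) * exp (- (2 * C) * ln (real n))" by (simp add: algebra_simps)
    also have "\<dots> \<le> exp (C * ln (real n)) * exp (- (2 * C) * ln (real n))"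
    proof (rule mult_right_mono)
      have "ln (1 / \<beta> + 3) \<le> C * ln (real n)" using lnC C0 by (simp add: divide_le_eq mult.commute)
      then have "exp (ln (1 / \<beta> + 3)) \<le> exp (C * ln (real n))" by simp
      moreover have "exp (ln (1 / \<beta> + 3)) = 1 / \<beta> + 3" using b0 by (intro exp_ln) (smt (verit) divide_pos_pos)
      ultimately show "1 / \<beta> + 3 \<le> exp (C * ln (real n))" by linarith
    qed simp
    also have "\<dots> = exp (- C * ln (real n))" by (simp add: exp_add[symmetric] algebra_simps)
    also have "\<dots> = real n powr (- C)" using n3 by (simp add: powr_def)
    finally have "gnp_prob n p (\<lambda>E. \<not> Good E) \<le> real n powr (- C)" using bad by linarith
    moreover have "gnp_prob n p (\<lambda>E. \<not> Good E) = 1 - gnp_prob n p Good" by (rule gnp_compl)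
    ultimately show "1 - real n powr (- C) \<le> gnp_prob n p Good" by linarith
  qed
qed


end
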